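(* Let $N\ge 2$ and let $T_1,\dots,T_N>0$ be i.i.d. random variables with a continuous distribution, with order statistics $T_{(1)}\le\cdots\le T_{(N)}$, and let $U_{(1)}\le\cdots\le U_{(N)}$ be the order statistics of $N$ independent standard uniform random variables. Let $C(s)$, $s=0,1,2,\dots$, be the income process of the pooled annuity fund described in the context. Let $\beta\in(0,1)$, $k\in\{1,2,\dots,N\}$ and $\varepsilon\in(0,1)$, and suppose \[ \mathbb P\left[(1-\varepsilon)\tfrac{i-1}{N}+\varepsilon\ge U_{(i)}\ge(1+\varepsilon)\tfrac{\min\{i,N-1\}}{N}-\varepsilon\ \text{for all } i\in\{1,2,\dots,k\}\right]\ge\beta. \] Then \[ \mathbb P\left[(1+\varepsilon)C(0)\ge C(s)\ge(1-\varepsilon)C(0)\ \text{for all } s\in\{1,2,\dots,\lfloor T_{(k)}\rfloor\}\right]\ge\beta. \]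
   Context: Pooled annuity fund: $N\ge2$ members, all aged $x\ge0$ at time $0$; member $i$ has future lifetime $T_i$ (from age $x$), the $T_i$ being i.i.d. with a continuous distribution. The number alive at age $x+t$ is $L_{x+t}=\sum_{i=1}^N \mathbf 1_{[T_i>t]}$. The survival probability is ${}_sp_{x+t}=\mathbb P[T_i>t+s\mid T_i>t]$. A constant effective rate of return $R>-1$ per unit time is earned; $\ddot a_{x+t}=1+\sum_{j=1}^\infty(1+R)^{-j}\,{}_jp_{x+t}$. Each member has account value $W(t)\ge0$ with constant $W(0)>0$ and withdraws income $C(t)=W(t)/\ddot a_{x+t}$ at $t=0,1,2,\dots$. The longevity credit at time $t+1$ to each survivor is $M(t+1)=(W(t)-C(t))(1+R)(L_{x+t}-L_{x+t+1})/L_{x+t+1}$ if $L_{x+t+1}>0$, and a surviving member's account becomes $W(t+1)=(W(t)-C(t))(1+R)+M(t+1)$. $\lfloor\cdot\rfloor$ denotes the integer part. *)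

theory Defs
  imports "HOL-Probability.Probability"
begin

definition order_stat :: "nat \<Rightarrow> (nat \<Rightarrow> real) \<Rightarrow> nat \<Rightarrow> real" where
  "order_stat N X i = sort (map X [0..<N]) ! (i - 1)"

text \<open>Survival probability s p_{x+t} = P[T > t+s | T > t] for the (common) lifetime law of X
  under M (with the convention a/0 = 0).\<close>
definition surv :: "'a measure \<Rightarrow> ('a \<Rightarrow> real) \<Rightarrow> nat \<Rightarrow> nat \<Rightarrow> real" where
  "surv M X s t = measure M {\<omega> \<in> space M. X \<omega> > real (t + s)} / measure M {\<omega> \<in> space M. X \<omega> > real t}"

text \<open>Annuity factor a_{x+t} = 1 + sum_{j>=1} (1+R)^(-j) jp_{x+t}.\<close>
definition ann :: "'a measure \<Rightarrow> ('a \<Rightarrow> real) \<Rightarrow> real \<Rightarrow> nat \<Rightarrow> real" where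
  "ann M X R t = 1 + (\<Sum>j. surv M X (Suc j) t / (1 + R) ^ Suc j)"

definition alive :: "nat \<Rightarrow> (nat \<Rightarrow> 'a \<Rightarrow> real) \<Rightarrow> 'a \<Rightarrow> nat \<Rightarrow> nat" where
  "alive N T \<omega> t = card {i \<in> {..<N}. T i \<omega> > real t}"

text \<open>Account value W(t) of a surviving member, given annuity factors a, alive counts L,
  rate R and initial value W0.  (If nobody survives, the longevity credit is set to 0.)\<close>
fun fundW :: "(nat \<Rightarrow> real) \<Rightarrow> (nat \<Rightarrow> nat) \<Rightarrow> real \<Rightarrow> real \<Rightarrow> nat \<Rightarrow> real" where
  "fundW a L R W0 0 = W0"
| "fundW a L R W0 (Suc t) =
     (let w = fundW a L R W0 t; c = w / a t;
          m = (if L (Suc t) > 0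
               then (w - c) * (1 + R) * (real (L t) - real (L (Suc t))) / real (L (Suc t))
               else 0)
      in (w - c) * (1 + R) + m)"

definition fundC :: "(nat \<Rightarrow> real) \<Rightarrow> (nat \<Rightarrow> nat) \<Rightarrow> real \<Rightarrow> real \<Rightarrow> nat \<Rightarrow> real" where
  "fundC a L R W0 t = fundW a L R W0 t / a t"

definition income :: "'a measure \<Rightarrow> nat \<Rightarrow> (nat \<Rightarrow> 'a \<Rightarrow> real) \<Rightarrow> real \<Rightarrow> real \<Rightarrow> 'a \<Rightarrow> nat \<Rightarrow> real" where
  "income M N T R W0 \<omega> t = fundC (ann M (T 0) R) (alive N T \<omega>) R W0 t"

end

theory Submission
  imports Defs
begin

lemma cdf_unif:
  "cdf (uniform_measure lborel {0..1::real}) u = max 0 (min u 1)"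
proof -
  have "cdf (uniform_measure lborel {0..1::real}) u = measure lborel ({0..1} \<inter> {..u}) / measure lborel {0..1::real}"
    unfolding cdf_def by (subst measure_uniform_measure) auto
  also have "\<dots> = max 0 (min u 1)"
  proof (cases "u < 0")
    case True
    then have "{0..1} \<inter> {..u} = ({}::real set)" by auto
    then show ?thesis using True by simp
  next
    case False
    then have "{0..1} \<inter> {..u} = {0..min u 1::real}" by auto
    then show ?thesis using False by simp
  qed
  finally show ?thesis .
qed

lemma real_distribution_unif: "real_distribution (uniform_measure lborel {0..1::real})"
  unfolding real_distribution_def real_distribution_axioms_def
  by (auto intro!: prob_space_uniform_measure)

lemma pit_set:
  assumes "real_distribution \<mu>" and cont: "\<And>x. measure \<mu> {x} = 0"
    and u: "0 \<le> u" "u < 1"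
  shows "measure \<mu> {t. cdf \<mu> t \<le> u} = u"
proof -
  interpret real_distribution \<mu> by fact
  let ?F = "cdf \<mu>"
  let ?A = "{t. ?F t \<le> u}"
  have contF: "isCont ?F x" for x using isCont_cdf cont by simp
  have mono: "x \<le> y \<Longrightarrow> ?F x \<le> ?F y" for x y by (rule cdf_nondecreasing)
  show ?thesis
  proof (cases "?A = {}")
    case True
    then have "u = 0"
    proof -
      { assume "u > 0"
        have "eventually (\<lambda>t. ?F t < u) at_bot"
          using cdf_lim_at_bot \<open>u > 0\<close> by (rule order_tendstoD)
        then obtain t where "?F t < u" by (metis eventually_at_bot_linorder order_refl)
        then have "t \<in> ?A" by simp
        with True have False by simp }
      then show ?thesis using u by force
    qed
    then show ?thesis using True by simp
  next
    case False
    have "eventually (\<lambda>t. ?F t > u) at_top"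
      using cdf_lim_at_top_prob \<open>u < 1\<close> by (rule order_tendstoD)
    then obtain b where b: "\<And>t. t \<ge> b \<Longrightarrow> ?F t > u" by (metis eventually_at_top_linorder)
    have bdd: "bdd_above ?A"
      proof (rule bdd_aboveI[of _ b])
      fix x assume "x \<in> ?A"
      show "x \<le> b"
      proof (rule ccontr)
        assume "\<not> x \<le> b" then have "?F x > u" using b by simp
        with \<open>x \<in> ?A\<close> show False by simp
      qed
    qed
    define s where "s = Sup ?A"
    have le_s: "t \<in> ?A \<Longrightarrow> t \<le> s" for t unfolding s_def by (rule cSup_upper[OF _ bdd])
    have lt_s: "t < s \<Longrightarrow> t \<in> ?A" for t
    proof -
      assume "t < s"
      then have "t < Sup ?A" by (simp add: s_def)
      then obtain t' where "t' \<in> ?A" "t < t'" using False by (rule less_cSupE)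
      then show ?thesis using mono[of t t'] by auto
    qed
    have Fs_le: "?F s \<le> u"
    proof (rule ccontr)
      assume "\<not> ?F s \<le> u"
      then have "eventually (\<lambda>t. ?F t > u) (at s)"
        using contF[of s] unfolding isCont_def by (intro order_tendstoD) auto
      then obtain d where d: "d > 0" "\<And>t. t \<noteq> s \<Longrightarrow> dist t s < d \<Longrightarrow> ?F t > u"
        by (auto simp: eventually_at)
      have "s - d/2 \<in> ?A" using lt_s d by simp
      moreover have "?F (s - d/2) > u" using d by (intro d(2)) (auto simp: dist_real_def)
      ultimately show False by simp
    qed
    have Fs_ge: "?F s \<ge> u"
    proof (rule ccontr)
      assume "\<not> ?F s \<ge> u"
      then have "eventually (\<lambda>t. ?F t < u) (at s)"
        using contF[of s] unfolding isCont_def by (intro order_tendstoD) auto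
      then obtain d where d: "d > 0" "\<And>t. t \<noteq> s \<Longrightarrow> dist t s < d \<Longrightarrow> ?F t < u"
        by (auto simp: eventually_at)
      have "?F (s + d/2) < u" using d by (intro d(2)) (auto simp: dist_real_def)
      then have "s + d/2 \<le> s" using le_s[of "s + d/2"] by simp
      then show False using d by simp
    qed
    have "?A = {..s}"
    proof
      show "?A \<subseteq> {..s}" using le_s by auto
      show "{..s} \<subseteq> ?A"
      proof
        fix t assume "t \<in> {..s}"
        then show "t \<in> ?A" using lt_s Fs_le by (cases "t = s") auto
      qed
    qed
    then have "measure \<mu> ?A = ?F s" by (simp add: cdf_def)
    then show ?thesis using Fs_le Fs_ge by simp
  qed
qed

lemma pit:
  assumes "real_distribution \<mu>" and cont: "\<And>x. measure \<mu> {x} = 0"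
  shows "distr \<mu> borel (cdf \<mu>) = uniform_measure lborel {0..1::real}"
proof -
  interpret real_distribution \<mu> by fact
  have meas: "cdf \<mu> \<in> borel_measurable \<mu>"
  proof -
    have eq: "measurable \<mu> borel = measurable borel (borel::real measure)"
      by (rule measurable_cong_sets) simp_all
    show ?thesis unfolding eq by (rule borel_measurable_mono) (simp add: mono_def cdf_nondecreasing)
  qed
  have rd: "real_distribution (distr \<mu> borel (cdf \<mu>))"
    using real_distribution_distr[OF meas] .
  show ?thesis
  proof (rule cdf_unique[OF rd real_distribution_unif], rule ext)
    fix u
    have "cdf (distr \<mu> borel (cdf \<mu>)) u = measure (distr \<mu> borel (cdf \<mu>)) {..u}"
      by (rule cdf_def2)
    also have "\<dots> = measure \<mu> (cdf \<mu> -` {..u} \<inter> space \<mu>)"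
      by (rule measure_distr) (use meas in auto)
    also have "\<dots> = measure \<mu> {t. cdf \<mu> t \<le> u}" by (simp add: vimage_def)
    also have "\<dots> = max 0 (min u 1)"
    proof -
      consider "u < 0" | "0 \<le> u \<and> u < 1" | "u \<ge> 1" by linarith
      then show ?thesis
      proof cases
        case 1
        then have "{t. cdf \<mu> t \<le> u} = {}" using cdf_nonneg by (metis (mono_tags) empty_Collect_eq linorder_not_less order_le_less_trans)
        then show ?thesis using 1 by simp
      next
        case 2 then show ?thesis using pit_set[OF assms] by simp
      next
        case 3
        then have "{t. cdf \<mu> t \<le> u} = UNIV" using cdf_bounded_prob by (auto intro: order.trans)
        then show ?thesis using 3 prob_space by (simp add: space_eq_univ[symmetric] del: space_eq_univ)
      qed
    qed
    finally show "cdf (distr \<mu> borel (cdf \<mu>)) u = cdf (uniform_measure lborel {0..1}) u"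
      by (simp add: cdf_unif)
  qed
qed


lemma nth_beyond: "length xs \<le> n \<Longrightarrow> xs ! n = [] ! (n - length xs)"
  by (induction xs arbitrary: n) (auto simp: nth_Cons split: nat.split)

lemma length_filter_sort: "length (filter P (sort xs)) = length (filter P xs)"
  by (metis mset_filter mset_sort size_mset)

lemma card_sum_real: "real (card {j. j < (N::nat) \<and> P j}) = (\<Sum>j<N. if P j then 1 else 0::real)"
proof -
  have "(\<Sum>j<N. if P j then 1 else 0::real) = (\<Sum>j\<in>{j\<in>{..<N}. P j}. 1)"
    by (rule sum.inter_filter[symmetric]) simp
  also have "{j\<in>{..<N}. P j} = {j. j < N \<and> P j}" by auto
  finally show ?thesis by simp
qed

lemma sorted_nth_le_iff:
  fixes ys :: "real list"
  assumes "sorted ys" "1 \<le> i" "i \<le> length ys"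
  shows "ys ! (i-1) \<le> x \<longleftrightarrow> i \<le> length (filter (\<lambda>y. y \<le> x) ys)"
proof -
  have L: "length (filter (\<lambda>y. y \<le> x) ys) = card {l. l < length ys \<and> ys ! l \<le> x}"
    by (rule length_filter_conv_card)
  show ?thesis
  proof
    assume h: "ys ! (i-1) \<le> x"
    have "{..<i} \<subseteq> {l. l < length ys \<and> ys ! l \<le> x}"
    proof
      fix l assume "l \<in> {..<i}"
      then have "l \<le> i - 1" "l < length ys" using assms by auto
      then have "ys ! l \<le> ys ! (i-1)" using assms by (intro sorted_nth_mono) auto
      then show "l \<in> {l. l < length ys \<and> ys ! l \<le> x}" using h \<open>l < length ys\<close> by auto
    qed
    then have "card {..<i} \<le> card {l. l < length ys \<and> ys ! l \<le> x}"
      by (intro card_mono) auto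
    then show "i \<le> length (filter (\<lambda>y. y \<le> x) ys)" using L by simp
  next
    assume h: "i \<le> length (filter (\<lambda>y. y \<le> x) ys)"
    show "ys ! (i-1) \<le> x"
    proof (rule ccontr)
      assume "\<not> ys ! (i-1) \<le> x"
      have "{l. l < length ys \<and> ys ! l \<le> x} \<subseteq> {..<i-1}"
      proof
        fix l assume l: "l \<in> {l. l < length ys \<and> ys ! l \<le> x}"
        show "l \<in> {..<i-1}"
        proof (rule ccontr)
          assume "l \<notin> {..<i-1}"
          then have "ys ! (i-1) \<le> ys ! l" using assms l by (intro sorted_nth_mono) auto
          then show False using l \<open>\<not> ys ! (i-1) \<le> x\<close> by auto
        qed
      qed
      then have "card {l. l < length ys \<and> ys ! l \<le> x} \<le> card {..<i-1}"
        by (intro card_mono) auto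
      then show False using L h assms by simp
    qed
  qed
qed

lemma length_filter_map_upt:
  "length (filter P (map X [0..<N])) = card {j. j < N \<and> P (X j)}"
  by (auto simp: length_filter_conv_card intro!: arg_cong[where f=card])

lemma os_le_iff:
  assumes "1 \<le> i" "i \<le> N"
  shows "order_stat N X i \<le> x \<longleftrightarrow> i \<le> card {j. j < N \<and> X j \<le> x}"
proof -
  have "order_stat N X i \<le> x \<longleftrightarrow> i \<le> length (filter (\<lambda>y. y \<le> x) (sort (map X [0..<N])))"
    unfolding order_stat_def using assms by (intro sorted_nth_le_iff) auto
  also have "\<dots> \<longleftrightarrow> i \<le> card {j. j < N \<and> X j \<le> x}"
    by (simp only: length_filter_sort length_filter_map_upt)
  finally show ?thesis .
qed

lemma os_mem:
  assumes "1 \<le> i" "i \<le> N"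
  shows "order_stat N X i \<in> X ` {..<N}"
proof -
  have "order_stat N X i \<in> set (sort (map X [0..<N]))"
    unfolding order_stat_def using assms by (intro nth_mem) auto
  then show ?thesis by auto
qed

lemma os_cong:
  assumes "\<And>j. j < N \<Longrightarrow> X j = Y j"
  shows "order_stat N X i = order_stat N Y i"
proof -
  have "map X [0..<N] = map Y [0..<N]" using assms by (intro map_cong) auto
  then show ?thesis by (simp only: order_stat_def)
qed

lemma os_mono_map:
  fixes F :: "real \<Rightarrow> real"
  assumes "mono F" and that: "1 \<le> i" "i \<le> N"
  shows "order_stat N (\<lambda>j. F (X j)) i = F (order_stat N X i)"
proof -
  let ?xs = "map X [0..<N]"
  have sortF: "sort (map F ?xs) = map F (sort ?xs)"
  proof (rule properties_for_sort)
    show "mset (map F (sort ?xs)) = mset (map F ?xs)" by (simp add: multiset.map_comp)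
    have "sorted_wrt (\<le>) (sort ?xs)" by simp
    then show "sorted (map F (sort ?xs))"
      unfolding sorted_map by (rule sorted_wrt_mono_rel[rotated]) (rule monoD[OF assms(1)])
  qed
  have B: "map (\<lambda>j. F (X j)) [0..<N] = map F ?xs" by simp
  have "order_stat N (\<lambda>j. F (X j)) i = map F (sort ?xs) ! (i - 1)"
    unfolding order_stat_def B sortF by (rule refl)
  also have "\<dots> = F (order_stat N X i)"
    unfolding order_stat_def using that by (subst nth_map) auto
  finally show ?thesis .
qed


lemma os_meas:
  assumes "\<And>j. j < N \<Longrightarrow> (\<lambda>\<omega>. X j \<omega>) \<in> borel_measurable M"
  shows "(\<lambda>\<omega>. order_stat N (\<lambda>j. X j \<omega>) i) \<in> borel_measurable M"
proof -
  consider "i > N" | "i = 0 \<and> N \<ge> 1" | "1 \<le> i \<and> i \<le> N" | "i = 0 \<and> N = 0" by linarith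
  then show ?thesis
  proof cases
    case 1
    then have "order_stat N (\<lambda>j. X j \<omega>) i = [] ! (i - 1 - N)" for \<omega>
      unfolding order_stat_def by (subst nth_beyond) auto
    then show ?thesis by simp
  next
    case 4
    then have "order_stat N (\<lambda>j. X j \<omega>) i = [] ! 0" for \<omega>
      unfolding order_stat_def by simp
    then show ?thesis by simp
  next
    case 3
    show ?thesis
    proof (subst borel_measurable_iff_le, intro allI)
      fix a
      have "{\<omega> \<in> space M. order_stat N (\<lambda>j. X j \<omega>) i \<le> a} =
            {\<omega> \<in> space M. real i \<le> (\<Sum>j<N. if X j \<omega> \<le> a then 1 else 0::real)}"
        using 3 by (simp add: os_le_iff card_sum_real[symmetric])
      also have "\<dots> \<in> sets M"
      proof -
        have m: "(\<lambda>\<omega>. if X j \<omega> \<le> a then 1 else 0::real) \<in> borel_measurable M" if "j < N" for j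
        proof -
          note assms[OF that, measurable]
          show ?thesis by measurable
        qed
        show ?thesis by (rule borel_measurable_le[OF borel_measurable_const borel_measurable_sum]) (simp add: m)
      qed
      finally show "{\<omega> \<in> space M. order_stat N (\<lambda>j. X j \<omega>) i \<le> a} \<in> sets M" .
    qed
  next
    case 2
    have "order_stat N (\<lambda>j. X j \<omega>) i = order_stat N (\<lambda>j. X j \<omega>) 1" for \<omega>
      using 2 by (simp add: order_stat_def)
    moreover have "(\<lambda>\<omega>. order_stat N (\<lambda>j. X j \<omega>) 1) \<in> borel_measurable M"
    proof (subst borel_measurable_iff_le, intro allI)
      fix a
      have "{\<omega> \<in> space M. order_stat N (\<lambda>j. X j \<omega>) 1 \<le> a} =
            {\<omega> \<in> space M. real 1 \<le> (\<Sum>j<N. if X j \<omega> \<le> a then 1 else 0::real)}"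
        using 2 by (simp add: os_le_iff card_sum_real[symmetric] del: of_nat_1)
      also have "\<dots> \<in> sets M"
      proof -
        have m: "(\<lambda>\<omega>. if X j \<omega> \<le> a then 1 else 0::real) \<in> borel_measurable M" if "j < N" for j
        proof -
          note assms[OF that, measurable]
          show ?thesis by measurable
        qed
        show ?thesis by (rule borel_measurable_le[OF borel_measurable_const borel_measurable_sum]) (simp add: m)
      qed
      finally show "{\<omega> \<in> space M. order_stat N (\<lambda>j. X j \<omega>) 1 \<le> a} \<in> sets M" .
    qed
    ultimately show ?thesis by (simp only:)
  qed
qed


lemma aux1: "(y::real) \<noteq> 0 \<Longrightarrow> z + z * (x - y) / y = z * x / y"
  by (simp add: field_simps)
lemma aux2: "(a::real) \<noteq> 0 \<Longrightarrow> w - w / a = w / a * (a - 1)"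
  by (simp add: field_simps)
lemma aux3: "(r::real) \<noteq> 0 \<Longrightarrow> A \<noteq> 0 \<Longrightarrow> c * (p / r * A) * r * x / y / A = c * p * x / y"
  by (simp add: field_simps)

lemma C_rec:
  fixes a :: "nat \<Rightarrow> real" and L :: "nat \<Rightarrow> nat"
  assumes rec: "a t = 1 + p / (1 + R) * a (Suc t)" and pos: "a t > 0" "a (Suc t) > 0"
    and L: "L (Suc t) > 0" and R: "R > -1"
  shows "fundC a L R W0 (Suc t) = fundC a L R W0 t * p * real (L t) / real (L (Suc t))"
proof -
  define w where "w = fundW a L R W0 t"
  have R1: "1 + R \<noteq> 0" using R by simp
  have LS: "real (L (Suc t)) \<noteq> 0" using L by simp
  have "fundW a L R W0 (Suc t) = (w - w / a t) * (1 + R) + (w - w / a t) * (1 + R) * (real (L t) - real (L (Suc t))) / real (L (Suc t))"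
    using L by (simp add: w_def Let_def)
  also have "\<dots> = (w - w / a t) * (1 + R) * real (L t) / real (L (Suc t))"
    using LS by (rule aux1)
  also have "w - w / a t = w / a t * (a t - 1)" using pos by (intro aux2) simp
  also have "a t - 1 = p / (1 + R) * a (Suc t)" using rec by simp
  finally have FW: "fundW a L R W0 (Suc t) = w / a t * (p / (1 + R) * a (Suc t)) * (1 + R) * real (L t) / real (L (Suc t))" .
  have As: "a (Suc t) \<noteq> 0" using pos by simp
  show ?thesis unfolding fundC_def FW w_def[symmetric] by (rule aux3[OF R1 As])
qed

lemma C_closed:
  fixes a S :: "nat \<Rightarrow> real" and L :: "nat \<Rightarrow> nat"
  assumes rec: "\<And>t. S (Suc t) > 0 \<Longrightarrow> a t = 1 + (S (Suc t) / S t) / (1 + R) * a (Suc t)"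
    and apos: "\<And>t. a t > 0" and S0: "S 0 = 1" and L0: "L 0 = N"
    and Smono: "\<And>t t'. t \<le> t' \<Longrightarrow> S t' \<le> S t"
    and R: "R > -1"
  shows "S s > 0 \<Longrightarrow> (\<forall>t\<le>s. L t > 0) \<Longrightarrow> fundC a L R W0 s = fundC a L R W0 0 * S s * real N / real (L s)"
proof (induction s)
  case 0
  then show ?case using S0 L0 by simp
next
  case (Suc s)
  have Ss: "S s > 0" using Suc.prems(1) Smono[of s "Suc s"] by simp
  have Ls: "L s > 0" "L (Suc s) > 0" using Suc.prems(2) by auto
  have IH: "fundC a L R W0 s = fundC a L R W0 0 * S s * real N / real (L s)"
    using Suc.IH Ss Suc.prems(2) by simp
  have "fundC a L R W0 (Suc s) = fundC a L R W0 s * (S (Suc s) / S s) * real (L s) / real (L (Suc s))"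
    by (rule C_rec[where a=a and t=s and L=L and p="S (Suc s) / S s" and R=R, OF rec[OF Suc.prems(1)] apos[of s] apos[of "Suc s"] Ls(2) R])
  also have "\<dots> = fundC a L R W0 0 * S (Suc s) * real N / real (L (Suc s))"
    unfolding IH using Ss Ls by (simp add: field_simps)
  finally show ?case .
qed

definition SS :: "'a measure \<Rightarrow> ('a \<Rightarrow> real) \<Rightarrow> nat \<Rightarrow> real" where
  "SS M X t = measure M {\<omega> \<in> space M. X \<omega> > real t}"

context
  fixes M :: "'a measure" and X :: "'a \<Rightarrow> real" and R :: real
  assumes P: "prob_space M" and Xm: "X \<in> borel_measurable M"
    and R: "R > -1"
    and summ: "\<forall>t. summable (\<lambda>j. surv M X (Suc j) t / (1 + R) ^ Suc j)"
begin


lemma SS_mono: "t \<le> t' \<Longrightarrow> SS M X t' \<le> SS M X t"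
proof -
  assume "t \<le> t'"
  interpret prob_space M by (rule P)
  show ?thesis unfolding SS_def
    by (rule finite_measure_mono) (use \<open>t \<le> t'\<close> Xm in auto)
qed

lemma SS_nonneg: "SS M X t \<ge> 0" unfolding SS_def by simp

lemma surv_SS: "surv M X s t = SS M X (t + s) / SS M X t"
  unfolding surv_def SS_def by simp

lemma ann_ge1: "ann M X R t \<ge> 1"
proof -
  have "0 \<le> (\<Sum>j. surv M X (Suc j) t / (1 + R) ^ Suc j)"
    using summ R by (intro suminf_nonneg) (auto simp: surv_SS SS_nonneg)
  then show ?thesis unfolding ann_def by simp
qed

lemma ann_rec:
  assumes pos: "SS M X (Suc t) > 0"
  shows "ann M X R t = 1 + (SS M X (Suc t) / SS M X t) / (1 + R) * ann M X R (Suc t)"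
proof -
  have St: "SS M X t > 0" using pos SS_mono[of t "Suc t"] by simp
  have R1: "1 + R \<noteq> 0" using R by simp
  define q where "q = (SS M X (Suc t) / SS M X t) / (1 + R)"
  define g where "g j = surv M X j (Suc t) / (1 + R) ^ j" for j
  have trm: "surv M X (Suc j) t / (1 + R) ^ Suc j = q * g j" for j
  proof -
    have "surv M X (Suc j) t / (1 + R) ^ Suc j = SS M X (Suc t + j) / SS M X t / ((1 + R) * (1 + R) ^ j)"
      unfolding surv_SS power_Suc by (simp only: add_Suc_right add_Suc)
    also have "\<dots> = q * g j" unfolding q_def g_def surv_SS using pos by simp
    finally show ?thesis .
  qed
  have sg: "summable g"
    using summ unfolding g_def by (subst summable_Suc_iff[symmetric]) simp
  have g0: "g 0 = 1" unfolding g_def surv_SS using pos by simp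
  have "(\<Sum>j. g (Suc j)) = suminf g - g 0" by (rule suminf_split_head[OF sg])
  then have gs: "suminf g = ann M X R (Suc t)"
    unfolding ann_def g0 by (simp add: g_def)
  have "ann M X R t = 1 + (\<Sum>j. q * g j)" unfolding ann_def trm ..
  also have "(\<Sum>j. q * g j) = q * suminf g" by (rule suminf_mult[OF sg])
  finally show ?thesis unfolding gs q_def .
qed

end


lemma nat_floor_iff: "(s::nat) \<in> {1..nat \<lfloor>x::real\<rfloor>} \<longleftrightarrow> 1 \<le> s \<and> real s \<le> x"
proof
  assume "s \<in> {1..nat \<lfloor>x\<rfloor>}"
  then have "1 \<le> s" "s \<le> nat \<lfloor>x\<rfloor>" by auto
  then have "int s \<le> \<lfloor>x\<rfloor>" by linarith
  then show "1 \<le> s \<and> real s \<le> x" using \<open>1 \<le> s\<close> by (simp add: le_floor_iff)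
next
  assume h: "1 \<le> s \<and> real s \<le> x"
  then have "int s \<le> \<lfloor>x\<rfloor>" by (simp add: le_floor_iff)
  then show "s \<in> {1..nat \<lfloor>x\<rfloor>}" using h by auto
qed

lemma card_split: "card {j. j < N \<and> P j} + card {j. j < (N::nat) \<and> \<not> P j} = N"
proof -
  have "card ({j. j < N \<and> P j} \<union> {j. j < N \<and> \<not> P j}) = card {j. j < N \<and> P j} + card {j. j < N \<and> \<not> P j}"
    by (rule card_Un_disjoint) auto
  moreover have "{j. j < N \<and> P j} \<union> {j. j < N \<and> \<not> P j} = {..<N}" by auto
  ultimately show ?thesis by simp
qed

lemma fundW_meas:
  assumes "\<And>t. (\<lambda>\<omega>. real (L \<omega> t)) \<in> borel_measurable M"
  shows "(\<lambda>\<omega>. fundW a (L \<omega>) R W0 s) \<in> borel_measurable M"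
proof (induction s)
  case 0
  then show ?case by simp
next
  case (Suc s)
  note Suc.IH[measurable] assms[measurable]
  have eq: "(\<lambda>\<omega>. fundW a (L \<omega>) R W0 (Suc s)) = (\<lambda>\<omega>. (fundW a (L \<omega>) R W0 s - fundW a (L \<omega>) R W0 s / a s) * (1 + R) +
     (if 0 < real (L \<omega> (Suc s))
      then (fundW a (L \<omega>) R W0 s - fundW a (L \<omega>) R W0 s / a s) * (1 + R) * (real (L \<omega> s) - real (L \<omega> (Suc s))) / real (L \<omega> (Suc s))
      else 0))"
    by (simp add: Let_def)
  show ?case unfolding eq by measurable
qed

lemma aux_low: "(n::real) > 0 \<Longrightarrow> S \<ge> 1 - ((1 - e) * J / n + e) \<Longrightarrow> S * n \<ge> (1 - e) * (n - J)"
proof -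
  assume n: "n > 0" and h: "S \<ge> 1 - ((1 - e) * J / n + e)"
  have "(1 - ((1 - e) * J / n + e)) * n \<le> S * n" using mult_right_mono[OF h] n by simp
  moreover have "(1 - ((1 - e) * J / n + e)) * n = (1 - e) * (n - J)" using n by (simp add: field_simps)
  ultimately show ?thesis by simp
qed

lemma aux_up: "(n::real) > 0 \<Longrightarrow> S \<le> 1 - ((1 + e) * J / n - e) \<Longrightarrow> S * n \<le> (1 + e) * (n - J)"
proof -
  assume n: "n > 0" and h: "S \<le> 1 - ((1 + e) * J / n - e)"
  have "S * n \<le> (1 - ((1 + e) * J / n - e)) * n" using mult_right_mono[OF h] n by simp
  moreover have "(1 - ((1 + e) * J / n - e)) * n = (1 + e) * (n - J)" using n by (simp add: field_simps)
  ultimately show ?thesis by simp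
qed

lemma aux_fin_lo: "(c::real) > 0 \<Longrightarrow> n > 0 \<Longrightarrow> l > 0 \<Longrightarrow> b * l \<le> S * n \<Longrightarrow> b * c \<le> c * S * n / l"
proof -
  assume c: "c > 0" and n: "n > 0" and l: "l > 0" and h: "b * l \<le> S * n"
  have "b \<le> S * n / l" using h l by (simp add: pos_le_divide_eq)
  then have "c * b \<le> c * (S * n / l)" by (rule mult_left_mono) (use c in simp)
  moreover have "c * (S * n / l) = c * S * n / l" by simp
  ultimately show ?thesis by (simp only: mult.commute[of b c])
qed

lemma aux_fin_up: "(c::real) > 0 \<Longrightarrow> n > 0 \<Longrightarrow> l > 0 \<Longrightarrow> S * n \<le> b * l \<Longrightarrow> c * S * n / l \<le> b * c"
proof -
  assume c: "c > 0" and n: "n > 0" and l: "l > 0" and h: "S * n \<le> b * l"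
  have "S * n / l \<le> b" using h l by (simp add: pos_divide_le_eq)
  then have "c * (S * n / l) \<le> c * b" by (rule mult_left_mono) (use c in simp)
  moreover have "c * (S * n / l) = c * S * n / l" by simp
  ultimately show ?thesis by (simp only: mult.commute[of b c])
qed


theorem corollary1:
  fixes M :: "'a measure" and M' :: "'b measure"
    and T :: "nat \<Rightarrow> 'a \<Rightarrow> real" and U :: "nat \<Rightarrow> 'b \<Rightarrow> real"
    and N k :: nat and R W0 \<beta> \<epsilon> :: real
  assumes "prob_space M" and "prob_space M'"
    and "N \<ge> 2"
    and indepT: "prob_space.indep_vars M (\<lambda>_. borel) T {..<N}"
    and identT: "\<forall>i<N. distr M borel (T i) = distr M borel (T 0)"
    and contT: "\<forall>y. measure M {\<omega> \<in> space M. T 0 \<omega> = y} = 0"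
    and posT: "\<forall>i<N. \<forall>\<omega>\<in>space M. T i \<omega> > 0"
    and indepU: "prob_space.indep_vars M' (\<lambda>_. borel) U {..<N}"
    and unifU: "\<forall>i<N. distr M' borel (U i) = uniform_measure lborel {0..1}"
    and "R > -1" and "W0 > 0"
    and summ: "\<forall>t. summable (\<lambda>j. surv M (T 0) (Suc j) t / (1 + R) ^ Suc j)"
    and "0 < \<beta>" and "\<beta> < 1"
    and "1 \<le> k" and "k \<le> N"
    and "0 < \<epsilon>" and "\<epsilon> < 1"
    and hyp: "measure M' {\<omega> \<in> space M'. \<forall>i\<in>{1..k}.
                 (1 - \<epsilon>) * (real i - 1) / real N + \<epsilon> \<ge> order_stat N (\<lambda>j. U j \<omega>) i \<and>
                 order_stat N (\<lambda>j. U j \<omega>) i \<ge> (1 + \<epsilon>) * real (min i (N - 1)) / real N - \<epsilon>} \<ge> \<beta>"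
  shows "measure M {\<omega> \<in> space M. \<forall>s\<in>{1..nat \<lfloor>order_stat N (\<lambda>j. T j \<omega>) k\<rfloor>}.
                 (1 + \<epsilon>) * income M N T R W0 \<omega> 0 \<ge> income M N T R W0 \<omega> s \<and>
                 income M N T R W0 \<omega> s \<ge> (1 - \<epsilon>) * income M N T R W0 \<omega> 0} \<ge> \<beta>"
proof -
  note PM = \<open>prob_space M\<close>
  interpret Mp: prob_space M by fact
  interpret M'p: prob_space M' by fact
  have Tm: "T i \<in> borel_measurable M" if "i < N" for i
    using indepT that unfolding Mp.indep_vars_def by auto
  have Um: "U i \<in> borel_measurable M'" if "i < N" for i
    using indepU that unfolding M'p.indep_vars_def by auto
  have N0: "0 < N" using \<open>N \<ge> 2\<close> by simp
  have T0m: "T 0 \<in> borel_measurable M" using Tm N0 by simp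
  define \<mu> where "\<mu> = distr M borel (T 0)"
  have rd\<mu>: "real_distribution \<mu>" unfolding \<mu>_def using T0m by simp
  define F where "F = cdf \<mu>"
  have cont\<mu>: "measure \<mu> {x} = 0" for x
  proof -
    have "measure \<mu> {x} = measure M (T 0 -` {x} \<inter> space M)"
      unfolding \<mu>_def by (rule measure_distr) (use T0m in auto)
    also have "T 0 -` {x} \<inter> space M = {\<omega> \<in> space M. T 0 \<omega> = x}" by auto
    finally show ?thesis using contT by simp
  qed
  have Fmono: "mono F"
  proof -
    interpret rd: real_distribution \<mu> by (rule rd\<mu>)
    show ?thesis unfolding F_def mono_def using rd.cdf_nondecreasing by blast
  qed
  have Fmeas: "F \<in> borel_measurable borel" using Fmono by (rule borel_measurable_mono)
  have F_eq: "F x = measure M {\<omega>\<in>space M. T 0 \<omega> \<le> x}" for x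
  proof -
    have "F x = measure \<mu> {..x}" unfolding F_def by (rule cdf_def2)
    also have "\<dots> = measure M (T 0 -` {..x} \<inter> space M)"
      unfolding \<mu>_def by (rule measure_distr) (use T0m in auto)
    also have "T 0 -` {..x} \<inter> space M = {\<omega>\<in>space M. T 0 \<omega> \<le> x}" by auto
    finally show ?thesis .
  qed
  define Unif where "Unif = uniform_measure lborel {0..1::real}"
  have distrFT: "distr M borel (\<lambda>\<omega>. F (T i \<omega>)) = Unif" if "i < N" for i
  proof -
    have "distr M borel (\<lambda>\<omega>. F (T i \<omega>)) = distr (distr M borel (T i)) borel F"
      using distr_distr[OF Fmeas Tm[OF that]] by (simp add: comp_def)
    also have "distr M borel (T i) = \<mu>" unfolding \<mu>_def using identT that by blast
    also have "distr \<mu> borel F = Unif" unfolding F_def Unif_def by (rule pit[OF rd\<mu> cont\<mu>])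
    finally show ?thesis .
  qed
  define P where "P = PiM {..<N} (\<lambda>_. borel :: real measure)"
  define XT where "XT = (\<lambda>\<omega>. \<lambda>j\<in>{..<N}. F (T j \<omega>))"
  define XU where "XU = (\<lambda>\<omega>. \<lambda>j\<in>{..<N}. U j \<omega>)"
  have XTm: "XT \<in> measurable M P" unfolding XT_def P_def
    by (intro measurable_restrict measurable_compose[OF Tm Fmeas]) simp
  have XUm: "XU \<in> measurable M' P" unfolding XU_def P_def
    by (intro measurable_restrict Um) simp
  have Nne: "{..<N} \<noteq> {}" using N0 by auto
  have indFT: "Mp.indep_vars (\<lambda>_. borel) (\<lambda>i \<omega>. F (T i \<omega>)) {..<N}"
    by (rule Mp.indep_vars_compose2[OF indepT]) (rule Fmeas)
  have dT: "distr M P XT = PiM {..<N} (\<lambda>_. Unif)"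
  proof -
    have "distr M P XT = PiM {..<N} (\<lambda>i. distr M borel (\<lambda>\<omega>. F (T i \<omega>)))"
      unfolding XT_def P_def
      by (rule Mp.indep_vars_iff_distr_eq_PiM'[THEN iffD1, OF Nne _ indFT])
         (intro measurable_compose[OF Tm Fmeas], simp)
    also have "\<dots> = PiM {..<N} (\<lambda>_. Unif)" by (rule PiM_cong) (auto simp: distrFT)
    finally show ?thesis .
  qed
  have dU: "distr M' P XU = PiM {..<N} (\<lambda>_. Unif)"
  proof -
    have "distr M' P XU = PiM {..<N} (\<lambda>i. distr M' borel (U i))"
      unfolding XU_def P_def
      by (rule M'p.indep_vars_iff_distr_eq_PiM'[THEN iffD1, OF Nne _ indepU]) (intro Um, simp)
    also have "\<dots> = PiM {..<N} (\<lambda>_. Unif)" by (rule PiM_cong) (auto simp: unifU Unif_def)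
    finally show ?thesis .
  qed
  define \<Phi> where "\<Phi> = (\<lambda>v::nat \<Rightarrow> real. \<forall>i\<in>{1..k}.
                 (1 - \<epsilon>) * (real i - 1) / real N + \<epsilon> \<ge> order_stat N v i \<and>
                 order_stat N v i \<ge> (1 + \<epsilon>) * real (min i (N - 1)) / real N - \<epsilon>)"
  have \<Phi>_restr: "\<Phi> (restrict f {..<N}) = \<Phi> f" for f
  proof -
    have "order_stat N (restrict f {..<N}) i = order_stat N f i" for i by (rule os_cong) simp
    then show ?thesis by (simp add: \<Phi>_def)
  qed
  have osP: "(\<lambda>v. order_stat N v i) \<in> borel_measurable P" for i
    using os_meas[of N "\<lambda>j v. v j" P i] unfolding P_def by simp
  define A where "A = {v \<in> space P. \<Phi> v}"
  have A_sets: "A \<in> sets P"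
  proof -
    note osP[measurable]
    show ?thesis unfolding A_def \<Phi>_def by measurable
  qed
  have EU: "{\<omega> \<in> space M'. \<Phi> (\<lambda>j. U j \<omega>)} = XU -` A \<inter> space M'"
    using measurable_space[OF XUm] by (auto simp: A_def XU_def \<Phi>_restr)
  have ET: "{\<omega> \<in> space M. \<Phi> (\<lambda>j. F (T j \<omega>))} = XT -` A \<inter> space M"
    using measurable_space[OF XTm] by (auto simp: A_def XT_def \<Phi>_restr)
  have ETs: "{\<omega> \<in> space M. \<Phi> (\<lambda>j. F (T j \<omega>))} \<in> sets M"
    unfolding ET by (rule measurable_sets[OF XTm A_sets])
  have meq: "measure M {\<omega> \<in> space M. \<Phi> (\<lambda>j. F (T j \<omega>))} = measure M' {\<omega> \<in> space M'. \<Phi> (\<lambda>j. U j \<omega>)}"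
  proof -
    have "measure M' {\<omega> \<in> space M'. \<Phi> (\<lambda>j. U j \<omega>)} = measure (distr M' P XU) A"
      unfolding EU by (rule measure_distr[symmetric, OF XUm A_sets])
    also have "\<dots> = measure (distr M P XT) A" unfolding dT dU ..
    also have "\<dots> = measure M {\<omega> \<in> space M. \<Phi> (\<lambda>j. F (T j \<omega>))}"
      unfolding ET by (rule measure_distr[OF XTm A_sets])
    finally show ?thesis by simp
  qed
  have hyp\<beta>: "measure M' {\<omega> \<in> space M'. \<Phi> (\<lambda>j. U j \<omega>)} \<ge> \<beta>"
    unfolding \<Phi>_def by (rule hyp)
  define Gc where "Gc = (\<Union>i\<in>{..<N}. \<Union>n::nat. {\<omega>\<in>space M. T i \<omega> = real n})"
  have Gc_null: "Gc \<in> null_sets M"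
    unfolding Gc_def
  proof (intro null_sets_UN' null_sets_UN)
    show "countable {..<N}" by simp
    fix i n assume i: "i \<in> {..<N}"
    have Ti: "T i \<in> borel_measurable M" using Tm i by simp
    have sets: "{\<omega>\<in>space M. T i \<omega> = real n} \<in> sets M" using Ti by measurable
    have "measure M {\<omega>\<in>space M. T i \<omega> = real n} = measure M (T i -` {real n} \<inter> space M)"
      by (rule arg_cong[where f="measure M"]) auto
    also have "\<dots> = measure (distr M borel (T i)) {real n}"
      by (rule measure_distr[symmetric]) (use Ti in auto)
    also have "distr M borel (T i) = \<mu>" using identT i unfolding \<mu>_def by blast
    also have "measure \<mu> {real n} = 0" by (rule cont\<mu>)
    finally show "{\<omega>\<in>space M. T i \<omega> = real n} \<in> null_sets M"
      using sets by (simp add: Mp.emeasure_eq_measure null_sets_def)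
  qed simp
  define a where "a = ann M (T 0) R"
  define S where "S = SS M (T 0)"
  have apos: "a t > 0" for t
    using ann_ge1[OF PM T0m \<open>R > -1\<close> summ, of t] unfolding a_def by simp
  have arec: "S (Suc t) > 0 \<Longrightarrow> a t = 1 + (S (Suc t) / S t) / (1 + R) * a (Suc t)" for t
    unfolding a_def S_def by (rule ann_rec[OF PM T0m \<open>R > -1\<close> summ])
  have Smono: "t \<le> t' \<Longrightarrow> S t' \<le> S t" for t t'
    unfolding S_def by (rule SS_mono[OF PM T0m \<open>R > -1\<close> summ])
  have S0: "S 0 = 1"
  proof -
    have "{\<omega> \<in> space M. T 0 \<omega> > real 0} = space M" using posT N0 by auto
    then show ?thesis unfolding S_def SS_def by (simp add: Mp.prob_space)
  qed
  have S_F: "S t = 1 - F (real t)" for t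
  proof -
    have "{\<omega> \<in> space M. T 0 \<omega> > real t} = space M - {\<omega>\<in>space M. T 0 \<omega> \<le> real t}" by auto
    moreover have "{\<omega>\<in>space M. T 0 \<omega> \<le> real t} \<in> sets M" using T0m by measurable
    ultimately show ?thesis unfolding S_def SS_def F_eq by (simp add: Mp.prob_compl)
  qed
  have S_le1: "S t \<le> 1" for t unfolding S_def SS_def by simp
  have alive_meas: "(\<lambda>\<omega>. real (alive N T \<omega> t)) \<in> borel_measurable M" for t
  proof -
    have eq: "real (alive N T \<omega> t) = (\<Sum>j<N. if real t < T j \<omega> then 1 else 0::real)" for \<omega>
      unfolding alive_def card_sum_real[symmetric] by simp
    have m: "(\<lambda>\<omega>. if real t < T j \<omega> then 1 else 0::real) \<in> borel_measurable M" if "j < N" for j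
    proof -
      note Tm[OF that, measurable]
      show ?thesis by measurable
    qed
    show ?thesis unfolding eq by (rule borel_measurable_sum) (simp add: m)
  qed
  have inc_meas: "(\<lambda>\<omega>. income M N T R W0 \<omega> s) \<in> borel_measurable M" for s
    unfolding income_def fundC_def
    by (intro borel_measurable_divide fundW_meas alive_meas borel_measurable_const)
  have osk_meas: "(\<lambda>\<omega>. order_stat N (\<lambda>j. T j \<omega>) k) \<in> borel_measurable M"
    by (rule os_meas) (use Tm in auto)
  let ?G = "{\<omega> \<in> space M. \<forall>s\<in>{1..nat \<lfloor>order_stat N (\<lambda>j. T j \<omega>) k\<rfloor>}.
                 (1 + \<epsilon>) * income M N T R W0 \<omega> 0 \<ge> income M N T R W0 \<omega> s \<and>
                 income M N T R W0 \<omega> s \<ge> (1 - \<epsilon>) * income M N T R W0 \<omega> 0}"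
  have G_alt: "?G = {\<omega> \<in> space M. \<forall>s::nat. 1 \<le> s \<and> real s \<le> order_stat N (\<lambda>j. T j \<omega>) k \<longrightarrow>
                 (1 + \<epsilon>) * income M N T R W0 \<omega> 0 \<ge> income M N T R W0 \<omega> s \<and>
                 income M N T R W0 \<omega> s \<ge> (1 - \<epsilon>) * income M N T R W0 \<omega> 0}"
    unfolding Ball_def nat_floor_iff ..
  have G_sets: "?G \<in> sets M"
  proof -
    note inc_meas[measurable] osk_meas[measurable]
    show ?thesis unfolding G_alt by measurable
  qed
  have incl: "{\<omega> \<in> space M. \<Phi> (\<lambda>j. F (T j \<omega>))} - Gc \<subseteq> ?G"
  proof
    fix \<omega> assume \<omega>: "\<omega> \<in> {\<omega> \<in> space M. \<Phi> (\<lambda>j. F (T j \<omega>))} - Gc"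
    then have \<omega>M: "\<omega> \<in> space M" and \<Phi>\<omega>: "\<Phi> (\<lambda>j. F (T j \<omega>))" by auto
    have noint: "T i \<omega> \<noteq> real n" if "i < N" for i n
      using \<omega> that unfolding Gc_def by auto
    define L where "L = alive N T \<omega>"
    define c0 where "c0 = fundC a L R W0 0"
    have inc: "income M N T R W0 \<omega> s = fundC a L R W0 s" for s
      unfolding income_def a_def L_def ..
    have c0pos: "c0 > 0" unfolding c0_def fundC_def using apos[of 0] \<open>W0 > 0\<close> by simp
    have L0: "L 0 = N"
    proof -
      have "{i \<in> {..<N}. real 0 < T i \<omega>} = {..<N}" using posT \<omega>M by auto
      then show ?thesis unfolding L_def alive_def by simp
    qed
    have Fhyp: "(1 - \<epsilon>) * (real i - 1) / real N + \<epsilon> \<ge> F (order_stat N (\<lambda>j. T j \<omega>) i) \<and>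
                F (order_stat N (\<lambda>j. T j \<omega>) i) \<ge> (1 + \<epsilon>) * real (min i (N - 1)) / real N - \<epsilon>"
      if "i \<in> {1..k}" for i
    proof -
      have eq: "order_stat N (\<lambda>j. F (T j \<omega>)) i = F (order_stat N (\<lambda>j. T j \<omega>) i)"
        by (rule os_mono_map[OF Fmono]) (use that \<open>k \<le> N\<close> in auto)
      have "(1 - \<epsilon>) * (real i - 1) / real N + \<epsilon> \<ge> order_stat N (\<lambda>j. F (T j \<omega>)) i \<and>
                order_stat N (\<lambda>j. F (T j \<omega>)) i \<ge> (1 + \<epsilon>) * real (min i (N - 1)) / real N - \<epsilon>"
        using \<Phi>\<omega> that unfolding \<Phi>_def by blast
      then show ?thesis unfolding eq .
    qed
    show "\<omega> \<in> ?G"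
    proof (unfold G_alt, intro CollectI conjI allI impI \<omega>M)
      fix s :: nat assume s: "1 \<le> s \<and> real s \<le> order_stat N (\<lambda>j. T j \<omega>) k"
      define J where "J = card {j. j < N \<and> T j \<omega> \<le> real s}"
      have "order_stat N (\<lambda>j. T j \<omega>) k \<in> (\<lambda>j. T j \<omega>) ` {..<N}"
        by (rule os_mem) (use \<open>1 \<le> k\<close> \<open>k \<le> N\<close> in auto)
      then have "order_stat N (\<lambda>j. T j \<omega>) k \<noteq> real s" using noint by (metis imageE lessThan_iff)
      then have "\<not> order_stat N (\<lambda>j. T j \<omega>) k \<le> real s" using s by auto
      then have Jk: "J < k" using os_le_iff[OF \<open>1 \<le> k\<close> \<open>k \<le> N\<close>] unfolding J_def by auto
      have LsJ: "L s = N - J"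
      proof -
        have "{i \<in> {..<N}. real s < T i \<omega>} = {j. j < N \<and> \<not> T j \<omega> \<le> real s}" by auto
        then show ?thesis unfolding L_def alive_def J_def using card_split[of N "\<lambda>j. T j \<omega> \<le> real s"]
          by simp
      qed
      have realL: "real (L s) = real N - real J" using LsJ Jk \<open>k \<le> N\<close> by simp
      have Lpos: "\<forall>t\<le>s. L t > 0"
      proof (intro allI impI)
        fix t assume "t \<le> s"
        have "L s \<le> L t" unfolding L_def alive_def
          by (rule card_mono) (use \<open>t \<le> s\<close> in auto)
        then show "L t > 0" using LsJ Jk \<open>k \<le> N\<close> by simp
      qed
      have Nr: "real N > 0" using N0 by simp
      have J1: "J + 1 \<in> {1..k}" using Jk by simp
      have "\<not> order_stat N (\<lambda>j. T j \<omega>) (J + 1) \<le> real s"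
        using os_le_iff[of "J + 1" N "\<lambda>j. T j \<omega>" "real s"] Jk \<open>k \<le> N\<close> unfolding J_def by auto
      then have "F (real s) \<le> F (order_stat N (\<lambda>j. T j \<omega>) (J + 1))"
        using monoD[OF Fmono] by auto
      also have "\<dots> \<le> (1 - \<epsilon>) * real J / real N + \<epsilon>"
        using Fhyp[OF J1] by simp
      finally have "S s \<ge> 1 - ((1 - \<epsilon>) * real J / real N + \<epsilon>)" unfolding S_F by simp
      then have low: "S s * real N \<ge> (1 - \<epsilon>) * (real N - real J)" by (rule aux_low[OF Nr])
      have "(1 - \<epsilon>) * (real N - real J) > 0" using Jk \<open>k \<le> N\<close> \<open>\<epsilon> < 1\<close> by simp
      then have Spos: "S s > 0" using low Nr by (metis less_le_trans zero_less_mult_pos2)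
      have up: "S s * real N \<le> (1 + \<epsilon>) * (real N - real J)"
      proof (cases "J = 0")
        case True
        then show ?thesis using S_le1[of s] Nr \<open>0 < \<epsilon>\<close>
          by (simp add: mult_right_mono order_trans[OF mult_right_mono[OF S_le1[of s]]])
      next
        case False
        then have J1': "J \<in> {1..k}" using Jk by simp
        have "order_stat N (\<lambda>j. T j \<omega>) J \<le> real s"
          using os_le_iff[of J N "\<lambda>j. T j \<omega>" "real s"] Jk \<open>k \<le> N\<close> False unfolding J_def by auto
        then have "F (order_stat N (\<lambda>j. T j \<omega>) J) \<le> F (real s)"
          using monoD[OF Fmono] by auto
        moreover have "min J (N - 1) = J" using Jk \<open>k \<le> N\<close> by simp
        ultimately have "F (real s) \<ge> (1 + \<epsilon>) * real J / real N - \<epsilon>"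
          using Fhyp[OF J1'] by simp
        then have "S s \<le> 1 - ((1 + \<epsilon>) * real J / real N - \<epsilon>)" unfolding S_F by simp
        then show ?thesis by (rule aux_up[OF Nr])
      qed
      have closed: "fundC a L R W0 s = c0 * S s * real N / real (L s)"
        unfolding c0_def
        by (rule C_closed[where S=S and a=a and L=L and N=N and R=R, OF arec apos S0 L0 Smono \<open>R > -1\<close> Spos Lpos])
      have Lr: "real (L s) > 0" using Lpos by simp
      show "(1 + \<epsilon>) * income M N T R W0 \<omega> 0 \<ge> income M N T R W0 \<omega> s"
        unfolding inc closed c0_def[symmetric]
        by (rule aux_fin_up[OF c0pos Nr Lr]) (simp add: realL up)
      show "income M N T R W0 \<omega> s \<ge> (1 - \<epsilon>) * income M N T R W0 \<omega> 0"
        unfolding inc closed c0_def[symmetric]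
        by (rule aux_fin_lo[OF c0pos Nr Lr]) (simp add: realL low)
    qed
  qed
  have "\<beta> \<le> measure M' {\<omega> \<in> space M'. \<Phi> (\<lambda>j. U j \<omega>)}" by (rule hyp\<beta>)
  also have "\<dots> = measure M {\<omega> \<in> space M. \<Phi> (\<lambda>j. F (T j \<omega>))}" by (rule meq[symmetric])
  also have "\<dots> = measure M ({\<omega> \<in> space M. \<Phi> (\<lambda>j. F (T j \<omega>))} - Gc)"
    by (rule measure_Diff_null_set[symmetric, OF ETs Gc_null])
  also have "\<dots> \<le> measure M ?G"
    by (rule Mp.finite_measure_mono[OF incl G_sets])
  finally show ?thesis .
qed


end
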